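(* Fix $n\in\mathbb N$ and positive integers $m_1,m_2$. Let $\mathbf g_{kj}(t)$, $k,j\in\{1,2\}$, $t=1,\dots,n$, be complex random variables i.i.d. with a continuous distribution, $\mathbf G^n_{kj}$ the $n\times n$ diagonal matrix with diagonal entries $\mathbf g_{kj}(1),\dots,\mathbf g_{kj}(n)$, and $\mathbf V^n_1\in\mathbb C^{n\times m_1}$, $\mathbf V^n_2\in\mathbb C^{n\times m_2}$ matrices whose $t$-th rows $\vec{\mathbf v}_1(t)^\top,\vec{\mathbf v}_2(t)^\top$ are deterministic functions of $\mathcal G^{t-1}=\{\mathbf g_{kj}(s):k,j\in\{1,2\},s\le t-1\}$. For $i\in\{1,\dots,n\}$ let $\mathcal A_i$ be the event $\mathrm{rank}[\mathbf G^{i}_{21}\mathbf V^{i}_1\ \ \mathbf G^{i}_{22}\mathbf V^{i}_2]=\mathrm{rank}[\mathbf G^{i-1}_{21}\mathbf V^{i-1}_1\ \ \mathbf G^{i-1}_{22}\mathbf V^{i-1}_2]$, and $\mathcal B_i$ the event that both $[\vec{\mathbf v}_1(i)^\top\ \vec 0_{1\times m_2}]$ and $[\vec 0_{1\times m_1}\ \vec{\mathbf v}_2(i)^\top]$ lie in $\mathrm{rowspan}[\mathbf G^{i-1}_{21}\mathbf V^{i-1}_1\ \ \mathbf G^{i-1}_{22}\mathbf V^{i-1}_2]$. Then $\Pr\big(\bigcup_{i=1}^n(\mathcal A_i\cap\mathcal B_i^c)\big)=0$.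
   Context: For $t\le n$, $\mathbf G^{t}_{kj}$ is the leading $t\times t$ principal submatrix of $\mathbf G^n_{kj}$ and $\mathbf V^{t}_j$ consists of the first $t$ rows of $\mathbf V^n_j$; for $t=0$ the matrix $[\mathbf G^0_{21}\mathbf V^0_1\ \ \mathbf G^0_{22}\mathbf V^0_2]$ is the zero row (rank 0, rowspan $\{0\}$). *)

theory Defs
  imports "HOL-Probability.Probability" "Jordan_Normal_Form.DL_Rank"
begin

text \<open>Indices: k, j range over {1,2}; times t over {1..n}. The random variable
  g k j t is the scalar g_kj(t). Matrices use 0-based row indices, so row a
  of a t-row matrix corresponds to time a+1.\<close>

definition Gmat :: "(nat \<Rightarrow> nat \<Rightarrow> nat \<Rightarrow> 'w \<Rightarrow> complex) \<Rightarrow> nat \<Rightarrow> nat \<Rightarrow> nat \<Rightarrow> 'w \<Rightarrow> complex mat" where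
  "Gmat g k j t \<omega> = mat_diag t (\<lambda>a. g k j (a + 1) \<omega>)"

definition Vmat :: "(nat \<Rightarrow> 'w \<Rightarrow> nat \<Rightarrow> complex) \<Rightarrow> nat \<Rightarrow> nat \<Rightarrow> 'w \<Rightarrow> complex mat" where
  "Vmat v m t \<omega> = Matrix.mat t m (\<lambda>(a, c). v (a + 1) \<omega> c)"

text \<open>The block matrix [G^t_21 V^t_1  G^t_22 V^t_2] (t x (m1+m2)); for t = 0 it has no rows.\<close>
definition Mmat :: "(nat \<Rightarrow> nat \<Rightarrow> nat \<Rightarrow> 'w \<Rightarrow> complex) \<Rightarrow> (nat \<Rightarrow> 'w \<Rightarrow> nat \<Rightarrow> complex) \<Rightarrow>
    (nat \<Rightarrow> 'w \<Rightarrow> nat \<Rightarrow> complex) \<Rightarrow> nat \<Rightarrow> nat \<Rightarrow> nat \<Rightarrow> 'w \<Rightarrow> complex mat" where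
  "Mmat g v1 v2 m1 m2 t \<omega> =
     four_block_mat (Gmat g 2 1 t \<omega> * Vmat v1 m1 t \<omega>) (Gmat g 2 2 t \<omega> * Vmat v2 m2 t \<omega>)
                    (0\<^sub>m 0 m1) (0\<^sub>m 0 m2)"

definition crank :: "complex mat \<Rightarrow> nat" where
  "crank A = vec_space.rank (dim_row A) A"

definition crowspan :: "complex mat \<Rightarrow> complex vec set" where
  "crowspan A = vec_space.row_space (dim_col A) A"

definition past :: "nat \<Rightarrow> (nat \<times> nat \<times> nat) set" where
  "past t = {1,2} \<times> {1,2} \<times> {1..<t}"

end

theory Submission
  imports Defs
begin

definition gs_ip :: "nat \<Rightarrow> (nat \<Rightarrow> complex) \<Rightarrow> (nat \<Rightarrow> complex) \<Rightarrow> complex" where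
  "gs_ip m u w = (\<Sum>c<m. u c * cnj (w c))"

definition gs_coef :: "nat \<Rightarrow> (nat \<Rightarrow> complex) \<Rightarrow> (nat \<Rightarrow> complex) \<Rightarrow> complex" where
  "gs_coef m u e = (if gs_ip m e e = 0 then 0 else gs_ip m u e / gs_ip m e e)"

function gsE :: "nat \<Rightarrow> (nat \<Rightarrow> nat \<Rightarrow> complex) \<Rightarrow> nat \<Rightarrow> nat \<Rightarrow> complex" where
  "gsE m R j c = R j c - (\<Sum>i<j. gs_coef m (R j) (gsE m R i) * gsE m R i c)"
  by pat_completeness auto
termination by (relation "Wellfounded.measure (\<lambda>(m,R,j,c). j)") auto

declare gsE.simps[simp del]

definition gs_Res :: "nat \<Rightarrow> (nat \<Rightarrow> nat \<Rightarrow> complex) \<Rightarrow> nat \<Rightarrow> (nat \<Rightarrow> complex) \<Rightarrow> nat \<Rightarrow> complex" where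
  "gs_Res m R k u c = u c - (\<Sum>i<k. gs_coef m u (gsE m R i) * gsE m R i c)"

definition gs_inspan :: "nat \<Rightarrow> (nat \<Rightarrow> nat \<Rightarrow> complex) \<Rightarrow> nat \<Rightarrow> (nat \<Rightarrow> complex) \<Rightarrow> bool" where
  "gs_inspan k R m u \<longleftrightarrow> (\<exists>y. \<forall>c<m. u c = (\<Sum>l<k. y l * R l c))"

lemma E_Res: "gsE m R j = gs_Res m R j (R j)"
  by (rule ext, subst gsE.simps) (simp add: gs_Res_def)

lemma ip_self_zero: assumes "gs_ip m u u = 0" "c < m" shows "u c = 0"
proof -
  have "(\<Sum>c<m. u c * cnj (u c)) = (\<Sum>c<m. complex_of_real ((cmod (u c))\<^sup>2))"
    by (rule sum.cong[OF refl]) (subst complex_norm_square, rule refl)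
  hence "complex_of_real (\<Sum>c<m. (cmod (u c))\<^sup>2) = 0" using assms(1) by (simp add: gs_ip_def)
  hence "(\<Sum>c<m. (cmod (u c))\<^sup>2) = 0" by (metis of_real_eq_0_iff)
  hence "\<forall>c\<in>{..<m}. (cmod (u c))\<^sup>2 = 0" by (subst (asm) sum_nonneg_eq_0_iff) auto
  thus ?thesis using assms(2) by auto
qed

lemma ip_cnj: "gs_ip m w u = cnj (gs_ip m u w)"
  by (simp add: gs_ip_def mult.commute)

lemma ip_lin1: "gs_ip m (\<lambda>c. u c - (\<Sum>i<k. a i * f i c)) w = gs_ip m u w - (\<Sum>i<k. a i * gs_ip m (f i) w)"
proof -
  have "gs_ip m (\<lambda>c. u c - (\<Sum>i<k. a i * f i c)) w = (\<Sum>c<m. u c * cnj (w c)) - (\<Sum>c<m. \<Sum>i<k. a i * f i c * cnj (w c))"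
    unfolding gs_ip_def by (simp add: left_diff_distrib sum_subtractf sum_distrib_right)
  also have "(\<Sum>c<m. \<Sum>i<k. a i * f i c * cnj (w c)) = (\<Sum>i<k. \<Sum>c<m. a i * f i c * cnj (w c))"
    by (rule sum.swap)
  also have "\<dots> = (\<Sum>i<k. a i * gs_ip m (f i) w)"
    unfolding gs_ip_def by (simp add: sum_distrib_left mult.assoc)
  finally show ?thesis by (simp add: gs_ip_def)
qed

lemma ip_lin2: "gs_ip m w (\<lambda>c. u c + (\<Sum>i<k. a i * f i c)) = gs_ip m w u + (\<Sum>i<k. cnj (a i) * gs_ip m w (f i))"
proof -
  have "gs_ip m w (\<lambda>c. u c + (\<Sum>i<k. a i * f i c)) = (\<Sum>c<m. w c * cnj (u c)) + (\<Sum>c<m. \<Sum>i<k. cnj (a i) * (w c * cnj (f i c)))"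
    unfolding gs_ip_def by (simp add: distrib_left sum.distrib sum_distrib_left algebra_simps)
  also have "(\<Sum>c<m. \<Sum>i<k. cnj (a i) * (w c * cnj (f i c))) = (\<Sum>i<k. \<Sum>c<m. cnj (a i) * (w c * cnj (f i c)))"
    by (rule sum.swap)
  also have "\<dots> = (\<Sum>i<k. cnj (a i) * gs_ip m w (f i))"
    unfolding gs_ip_def by (simp add: sum_distrib_left)
  finally show ?thesis by (simp add: gs_ip_def)
qed

lemma ip_lc2: "gs_ip m w (\<lambda>c. (\<Sum>i<k. a i * f i c)) = (\<Sum>i<k. cnj (a i) * gs_ip m w (f i))"
  using ip_lin2[where u="\<lambda>_. 0" and m=m and w=w and k=k and a=a and f=f] by (simp add: gs_ip_def)

lemma coef_mult: "gs_coef m u e * gs_ip m e e = gs_ip m u e"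
proof (cases "gs_ip m e e = 0")
  case True
  hence "\<forall>c<m. e c = 0" using ip_self_zero by blast
  hence "gs_ip m u e = 0" by (simp add: gs_ip_def)
  thus ?thesis using True by (simp add: gs_coef_def)
qed (simp add: gs_coef_def)

lemma Res_orth:
  assumes orth: "\<And>i i'. i < k \<Longrightarrow> i' < k \<Longrightarrow> i \<noteq> i' \<Longrightarrow> gs_ip m (gsE m R i') (gsE m R i) = 0"
    and "i < k"
  shows "gs_ip m (gs_Res m R k u) (gsE m R i) = 0"
proof -
  have "gs_ip m (gs_Res m R k u) (gsE m R i) = gs_ip m u (gsE m R i) - (\<Sum>i'<k. gs_coef m u (gsE m R i') * gs_ip m (gsE m R i') (gsE m R i))"
    unfolding gs_Res_def[abs_def] by (rule ip_lin1)
  also have "(\<Sum>i'<k. gs_coef m u (gsE m R i') * gs_ip m (gsE m R i') (gsE m R i)) = gs_coef m u (gsE m R i) * gs_ip m (gsE m R i) (gsE m R i)"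
  proof -
    have "(\<Sum>i'<k. gs_coef m u (gsE m R i') * gs_ip m (gsE m R i') (gsE m R i)) = gs_coef m u (gsE m R i) * gs_ip m (gsE m R i) (gsE m R i)
       + (\<Sum>i'\<in>{..<k}-{i}. gs_coef m u (gsE m R i') * gs_ip m (gsE m R i') (gsE m R i))"
      using assms(2) by (subst sum.remove[of _ i]) auto
    also have "(\<Sum>i'\<in>{..<k}-{i}. gs_coef m u (gsE m R i') * gs_ip m (gsE m R i') (gsE m R i)) = 0"
      using orth assms(2) by (intro sum.neutral) auto
    finally show ?thesis by simp
  qed
  finally show ?thesis by (simp add: coef_mult)
qed
lemma E_orth_aux: "\<forall>i i'. i < j \<longrightarrow> i' < j \<longrightarrow> i \<noteq> i' \<longrightarrow> gs_ip m (gsE m R i') (gsE m R i) = 0"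
proof (induction j)
  case 0 thus ?case by simp
next
  case (Suc j)
  have IH: "\<And>i i'. i < j \<Longrightarrow> i' < j \<Longrightarrow> i \<noteq> i' \<Longrightarrow> gs_ip m (gsE m R i') (gsE m R i) = 0"
    using Suc.IH by simp
  have A: "gs_ip m (gsE m R j) (gsE m R i) = 0" if "i < j" for i
  proof -
    have "gs_ip m (gs_Res m R j (R j)) (gsE m R i) = 0" by (rule Res_orth[OF IH that])
    thus ?thesis by (simp only: E_Res)
  qed
  show ?case
  proof (intro allI impI)
    fix i i' assume h: "i < Suc j" "i' < Suc j" "i \<noteq> i'"
    show "gs_ip m (gsE m R i') (gsE m R i) = 0"
    proof (cases "i' = j")
      case True
      hence "i < j" using h by simp
      from A[OF this] True show ?thesis by simp
    next
      case False
      hence i': "i' < j" using h by simp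
      show ?thesis
      proof (cases "i = j")
        case True
        have "gs_ip m (gsE m R i) (gsE m R i') = 0" using A[OF i'] True by simp
        thus ?thesis by (subst ip_cnj) simp
      next
        case False2: False
        hence "i < j" using h by simp
        from IH[OF this i' h(3)] show ?thesis .
      qed
    qed
  qed
qed

lemma Res_orth_E: "i < k \<Longrightarrow> gs_ip m (gs_Res m R k u) (gsE m R i) = 0"
proof -
  assume "i < k"
  have "\<And>i i'. i < k \<Longrightarrow> i' < k \<Longrightarrow> i \<noteq> i' \<Longrightarrow> gs_ip m (gsE m R i') (gsE m R i) = 0"
    using E_orth_aux[of k m R] by simp
  from Res_orth[OF this \<open>i < k\<close>] show ?thesis .
qed

lemma comb:
  fixes F Y R :: "nat \<Rightarrow> nat \<Rightarrow> complex" and a :: "nat \<Rightarrow> complex"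
  assumes "\<forall>i<j. \<forall>c. F i c = (\<Sum>l<k. Y i l * R l c)"
  shows "(\<Sum>i<j. a i * F i c) = (\<Sum>l<k. (\<Sum>i<j. a i * Y i l) * R l c)"
proof -
  have "(\<Sum>i<j. a i * F i c) = (\<Sum>i<j. \<Sum>l<k. a i * Y i l * R l c)"
  proof (intro sum.cong refl)
    fix i assume "i \<in> {..<j}"
    hence "F i c = (\<Sum>l<k. Y i l * R l c)" using assms by simp
    hence "a i * F i c = a i * (\<Sum>l<k. Y i l * R l c)" by simp
    also have "\<dots> = (\<Sum>l<k. a i * (Y i l * R l c))" by (rule sum_distrib_left)
    finally show "a i * F i c = (\<Sum>l<k. a i * Y i l * R l c)" by (simp add: mult.assoc)
  qed
  also have "\<dots> = (\<Sum>l<k. \<Sum>i<j. a i * Y i l * R l c)" by (rule sum.swap)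
  also have "\<dots> = (\<Sum>l<k. (\<Sum>i<j. a i * Y i l) * R l c)" by (simp add: sum_distrib_right)
  finally show ?thesis .
qed

lemma E_in_sp: "j < k \<Longrightarrow> \<exists>y. \<forall>c. gsE m R j c = (\<Sum>l<k. y l * R l c)"
proof (induction j rule: less_induct)
  case (less j)
  have "\<forall>i. \<exists>y. i < j \<longrightarrow> (\<forall>c. gsE m R i c = (\<Sum>l<k. y l * R l c))"
    using less by (metis order.strict_trans)
  then obtain Y where Y: "\<forall>i<j. \<forall>c. gsE m R i c = (\<Sum>l<k. Y i l * R l c)" by metis
  define y where "y l = (if l = j then 1 else 0) - (\<Sum>i<j. gs_coef m (R j) (gsE m R i) * Y i l)" for l
  have "gsE m R j c = (\<Sum>l<k. y l * R l c)" for c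
  proof -
    have "(\<Sum>l<k. y l * R l c) = (\<Sum>l<k. (if l = j then 1 else 0) * R l c) - (\<Sum>l<k. (\<Sum>i<j. gs_coef m (R j) (gsE m R i) * Y i l) * R l c)"
      unfolding y_def by (simp add: left_diff_distrib sum_subtractf)
    also have "(\<Sum>l<k. (if l = j then 1 else 0) * R l c) = (\<Sum>l<k. (if l = j then R l c else 0))"
      by (intro sum.cong refl) auto
    also have "\<dots> = R j c" using less.prems by (simp add: sum.delta)
    also have "(\<Sum>l<k. (\<Sum>i<j. gs_coef m (R j) (gsE m R i) * Y i l) * R l c) = (\<Sum>i<j. gs_coef m (R j) (gsE m R i) * gsE m R i c)"
      by (rule comb[symmetric]) (use Y in blast)
    finally show ?thesis by (simp add: gsE.simps[of m R j c])
  qed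
  thus ?case by blast
qed

lemma Res_sp: "\<exists>y. \<forall>c. u c - gs_Res m R k u c = (\<Sum>l<k. y l * R l c)"
proof -
  have "\<forall>i. \<exists>y. i < k \<longrightarrow> (\<forall>c. gsE m R i c = (\<Sum>l<k. y l * R l c))"
    using E_in_sp by metis
  then obtain Y where Y: "\<forall>i<k. \<forall>c. gsE m R i c = (\<Sum>l<k. Y i l * R l c)" by metis
  show ?thesis unfolding gs_Res_def
    by (rule exI[of _ "\<lambda>l. \<Sum>i<k. gs_coef m u (gsE m R i) * Y i l"]) (simp add: comb[OF Y])
qed

lemma ip_cong2: "(\<And>c. c < m \<Longrightarrow> f c = g c) \<Longrightarrow> gs_ip m w f = gs_ip m w g"
  unfolding gs_ip_def by (intro sum.cong) auto

lemma ip_cong1: "(\<And>c. c < m \<Longrightarrow> f c = g c) \<Longrightarrow> gs_ip m f w = gs_ip m g w"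
  unfolding gs_ip_def by (intro sum.cong) auto

lemma Res_orth_row: "l < k \<Longrightarrow> gs_ip m (gs_Res m R k u) (R l) = 0"
proof -
  assume l: "l < k"
  have "R l = (\<lambda>c. gsE m R l c + (\<Sum>i<l. gs_coef m (R l) (gsE m R i) * gsE m R i c))"
    by (rule ext) (simp add: gsE.simps[of m R l])
  hence "gs_ip m (gs_Res m R k u) (R l) = gs_ip m (gs_Res m R k u) (\<lambda>c. gsE m R l c + (\<Sum>i<l. gs_coef m (R l) (gsE m R i) * gsE m R i c))"
    by (rule arg_cong)
  also have "\<dots> = gs_ip m (gs_Res m R k u) (gsE m R l) + (\<Sum>i<l. cnj (gs_coef m (R l) (gsE m R i)) * gs_ip m (gs_Res m R k u) (gsE m R i))"
    by (rule ip_lin2)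
  also have "\<dots> = 0" using l by (simp add: Res_orth_E)
  finally show ?thesis .
qed

lemma Res_orth_comb: "gs_ip m (gs_Res m R k u) (\<lambda>c. \<Sum>l<k. y l * R l c) = 0"
  by (simp add: ip_lc2 Res_orth_row)

lemma ip_Res_self: "gs_ip m (gs_Res m R k u) (gs_Res m R k u) = gs_ip m (gs_Res m R k u) u"
proof -
  have "gs_Res m R k u = (\<lambda>c. u c + (\<Sum>i<k. (- gs_coef m u (gsE m R i)) * gsE m R i c))"
    by (rule ext) (simp add: gs_Res_def sum_negf)
  hence "gs_ip m (gs_Res m R k u) (gs_Res m R k u) = gs_ip m (gs_Res m R k u) (\<lambda>c. u c + (\<Sum>i<k. (- gs_coef m u (gsE m R i)) * gsE m R i c))"
    by (rule arg_cong)
  also have "\<dots> = gs_ip m (gs_Res m R k u) u + (\<Sum>i<k. cnj (- gs_coef m u (gsE m R i)) * gs_ip m (gs_Res m R k u) (gsE m R i))"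
    by (rule ip_lin2)
  finally have "gs_ip m (gs_Res m R k u) (gs_Res m R k u) = gs_ip m (gs_Res m R k u) u + (\<Sum>i<k. cnj (- gs_coef m u (gsE m R i)) * gs_ip m (gs_Res m R k u) (gsE m R i))" .
  thus ?thesis by (simp add: Res_orth_E)
qed

lemma inspan_Res: assumes "gs_inspan k R m u" "c < m" shows "gs_Res m R k u c = 0"
proof -
  obtain y where y: "\<forall>c<m. u c = (\<Sum>l<k. y l * R l c)" using assms(1) unfolding gs_inspan_def by blast
  have "gs_ip m (gs_Res m R k u) u = gs_ip m (gs_Res m R k u) (\<lambda>c. \<Sum>l<k. y l * R l c)"
    using y by (intro ip_cong2) auto
  hence "gs_ip m (gs_Res m R k u) (gs_Res m R k u) = 0" by (simp add: ip_Res_self Res_orth_comb)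
  thus ?thesis using ip_self_zero assms(2) by blast
qed

lemma Res_inspan: assumes "\<forall>c<m. gs_Res m R k u c = 0" shows "gs_inspan k R m u"
proof -
  obtain y where y: "\<forall>c. u c - gs_Res m R k u c = (\<Sum>l<k. y l * R l c)" using Res_sp by blast
  have "\<forall>c<m. u c = (\<Sum>l<k. y l * R l c)"
  proof (intro allI impI)
    fix c assume "c < m"
    have "u c = u c - gs_Res m R k u c" using assms \<open>c < m\<close> by simp
    also have "\<dots> = (\<Sum>l<k. y l * R l c)" using y by blast
    finally show "u c = (\<Sum>l<k. y l * R l c)" .
  qed
  thus ?thesis unfolding gs_inspan_def by blast
qed

lemma fredholm:
  assumes "\<not> gs_inspan k R m u"
  shows "\<exists>x. (\<forall>l<k. (\<Sum>c<m. R l c * x c) = 0) \<and> (\<Sum>c<m. u c * x c) = 1"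
proof -
  let ?r = "gs_Res m R k u"
  have nz: "gs_ip m ?r ?r \<noteq> 0" using assms Res_inspan ip_self_zero by blast
  define x where "x c = cnj (?r c) / gs_ip m ?r ?r" for c
  have "(\<Sum>c<m. R l c * x c) = 0" if "l < k" for l
  proof -
    have "(\<Sum>c<m. R l c * x c) = gs_ip m (R l) ?r / gs_ip m ?r ?r"
      unfolding x_def gs_ip_def by (simp add: sum_divide_distrib)
    also have "gs_ip m (R l) ?r = 0" using Res_orth_row[OF that] by (subst ip_cnj) simp
    finally show ?thesis by simp
  qed
  moreover have "(\<Sum>c<m. u c * x c) = 1"
  proof -
    have "(\<Sum>c<m. u c * x c) = gs_ip m u ?r / gs_ip m ?r ?r"
      unfolding x_def gs_ip_def by (simp add: sum_divide_distrib)
    also have "gs_ip m u ?r = gs_ip m ?r ?r"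
      by (subst ip_cnj) (simp add: ip_Res_self[symmetric] ip_cnj[of m ?r ?r, symmetric])
    finally show ?thesis using nz by simp
  qed
  ultimately show ?thesis by blast
qed

lemma ip_add: "gs_ip m (\<lambda>c. a * u c + b * w c) e = a * gs_ip m u e + b * gs_ip m w e"
  unfolding gs_ip_def by (simp add: distrib_right sum.distrib sum_distrib_left mult.assoc)

lemma coef_lin: "gs_coef m (\<lambda>c. a * u c + b * w c) e = a * gs_coef m u e + b * gs_coef m w e"
  unfolding gs_coef_def ip_add by (simp add: add_divide_distrib)

lemma Res_lin: "gs_Res m R k (\<lambda>c. a * u c + b * w c) c = a * gs_Res m R k u c + b * gs_Res m R k w c"
proof -
  have "(\<Sum>i<k. gs_coef m (\<lambda>c. a * u c + b * w c) (gsE m R i) * gsE m R i c) =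
        a * (\<Sum>i<k. gs_coef m u (gsE m R i) * gsE m R i c) + b * (\<Sum>i<k. gs_coef m w (gsE m R i) * gsE m R i c)"
    unfolding coef_lin by (simp add: distrib_right sum.distrib sum_distrib_left mult.assoc)
  thus ?thesis unfolding gs_Res_def by (simp add: right_diff_distrib)
qed

lemma diag_mult: "mat_diag t f * Matrix.mat t m h = Matrix.mat t m (\<lambda>(i,j). f i * h (i,j))"
  by (rule eq_matI) (auto simp: mat_diag_mult_left[of _ t m])
lemma Mmat_carrier: "Mmat g v1 v2 m1 m2 t \<omega> \<in> carrier_mat t (m1+m2)"
  unfolding Mmat_def Gmat_def Vmat_def carrier_mat_def by (simp add: diag_mult)
lemma Mmat_index: "l < t \<Longrightarrow> c < m1 + m2 \<Longrightarrow> Mmat g v1 v2 m1 m2 t \<omega> $$ (l,c) =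
   (if c < m1 then g 2 1 (l+1) \<omega> * v1 (l+1) \<omega> c else g 2 2 (l+1) \<omega> * v2 (l+1) \<omega> (c - m1))"
  unfolding Mmat_def Gmat_def Vmat_def
  by (simp add: diag_mult)


lemma rank_lt:
  fixes A B :: "complex mat" and x :: "nat \<Rightarrow> complex"
  assumes A: "A \<in> carrier_mat (Suc k) m" and B: "B \<in> carrier_mat k m"
    and AB: "\<And>l c. l < k \<Longrightarrow> c < m \<Longrightarrow> A $$ (l,c) = B $$ (l,c)"
    and x0: "\<And>l. l < k \<Longrightarrow> (\<Sum>c<m. B $$ (l,c) * x c) = 0"
    and x1: "(\<Sum>c<m. A $$ (k,c) * x c) = 1"
  shows "vec_space.rank k B < vec_space.rank (Suc k) A"
proof -
  interpret VA: vec_space "TYPE(complex)" "Suc k" .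
  interpret VB: vec_space "TYPE(complex)" k .
  obtain S where maxS: "maximal S (\<lambda>T. T \<subseteq> set (cols B) \<and> VB.lin_indpt T)"
    using maximal_exists[of "(\<lambda>T. T \<subseteq> set (cols B) \<and> VB.lin_indpt T)" "card (set (cols B))" "{}"]
    by (meson List.finite_set card_mono empty_iff empty_subsetI VB.finite_lin_indpt2 rev_finite_subset)
  have rankB: "VB.rank B = card S" by (rule VB.rank_card_indpt[OF B maxS])
  have SB: "S \<subseteq> set (cols B)" and Sli: "VB.lin_indpt S" using maxS unfolding maximal_def by auto
  have finS: "finite S" using SB finite_subset by blast
  have Scar: "S \<subseteq> carrier_vec k" using SB B by (auto simp: cols_def)
  have dimS: "\<And>s. s \<in> S \<Longrightarrow> dim_vec s = k" using Scar carrier_vecD by blast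
  have "\<forall>s\<in>S. \<exists>j. j < m \<and> col B j = s" using SB B by (force simp: cols_def)
  then obtain J where J: "\<And>s. s \<in> S \<Longrightarrow> J s < m \<and> col B (J s) = s" by metis
  define L where "L s = col A (J s)" for s
  define T where "T = L ` S"
  have Lidx: "L s $ i = s $ i" if "s \<in> S" "i < k" for s i
  proof -
    have "L s $ i = A $$ (i, J s)" unfolding L_def using A J[OF that(1)] that(2) by simp
    also have "\<dots> = B $$ (i, J s)" using AB that(2) J[OF that(1)] by simp
    also have "\<dots> = col B (J s) $ i" using B J[OF that(1)] that(2) by (intro index_col[symmetric]) auto
    finally show ?thesis using J[OF that(1)] by simp
  qed
  have injL: "inj_on L S"
  proof (rule inj_onI)
    fix s s' assume h: "s \<in> S" "s' \<in> S" "L s = L s'"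
    show "s = s'"
    proof (rule eq_vecI)
      show "dim_vec s = dim_vec s'" using h dimS by auto
      fix i assume "i < dim_vec s'"
      hence "i < k" using h dimS by auto
      thus "s $ i = s' $ i" using Lidx h by metis
    qed
  qed
  have cardT: "card T = card S" unfolding T_def by (rule card_image[OF injL])
  have finT: "finite T" unfolding T_def using finS by simp
  have TA: "T \<subseteq> set (cols A)" unfolding T_def L_def using J A by (auto simp: cols_def)
  have Tcar: "T \<subseteq> carrier_vec (Suc k)" using TA A by (auto simp: cols_def)
  have key: "\<forall>t\<in>T. d t = 0" if hd: "\<And>i. i < k \<Longrightarrow> (\<Sum>t\<in>T. d t * t $ i) = 0" for d
  proof -
    define b where "b s = d (L s)" for s
    have "VB.lincomb b S = 0\<^sub>v k"
    proof (rule eq_vecI)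
      show "dim_vec (VB.lincomb b S) = dim_vec (0\<^sub>v k)" using VB.lincomb_dim[OF finS Scar] by simp
      fix i assume "i < dim_vec (0\<^sub>v k)"
      hence i: "i < k" by simp
      have "VB.lincomb b S $ i = (\<Sum>s\<in>S. b s * s $ i)" by (rule VB.lincomb_index[OF i Scar])
      also have "\<dots> = (\<Sum>s\<in>S. d (L s) * L s $ i)" unfolding b_def using Lidx i by simp
      also have "\<dots> = (\<Sum>t\<in>T. d t * t $ i)" unfolding T_def by (rule sum.reindex[OF injL, symmetric, unfolded comp_def])
      also have "\<dots> = 0" using hd i by simp
      finally show "VB.lincomb b S $ i = 0\<^sub>v k $ i" using i by simp
    qed
    note lc0 = this
    have "\<forall>s\<in>S. b s = 0"
    proof (rule ccontr)
      assume "\<not> (\<forall>s\<in>S. b s = 0)"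
      then obtain s where "s \<in> S" "b s \<noteq> 0" by blast
      hence "VB.lin_dep S" unfolding VB.lin_dep_def using finS lc0
        by (intro exI[of _ S] exI[of _ b] exI[of _ s]) simp
      thus False using Sli by simp
    qed
    thus ?thesis unfolding T_def b_def by auto
  qed
  have Tli: "VA.lin_indpt T"
  proof (rule VA.finite_lin_indpt2[OF finT])
    show "T \<subseteq> carrier_vec (Suc k)" using Tcar by simp
  next
    fix a assume "True" and lc: "VA.lincomb a T = 0\<^sub>v (Suc k)"
    have "\<forall>t\<in>T. a t = 0"
    proof (rule key)
      fix i assume "i < k"
      hence "i < Suc k" by simp
      have "(\<Sum>t\<in>T. a t * t $ i) = VA.lincomb a T $ i" by (rule VA.lincomb_index[OF \<open>i < Suc k\<close> Tcar, symmetric])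
      thus "(\<Sum>t\<in>T. a t * t $ i) = 0" using lc \<open>i < Suc k\<close> by simp
    qed
    thus "\<forall>v\<in>T. a v = 0" by simp
  qed
  have "\<exists>j0<m. col A j0 \<notin> VA.span T"
  proof (rule ccontr)
    assume "\<not> (\<exists>j0<m. col A j0 \<notin> VA.span T)"
    hence "\<forall>j. \<exists>a. j < m \<longrightarrow> VA.lincomb a T = col A j"
      using VA.finite_in_span[OF finT Tcar] by metis
    then obtain C where C: "\<And>j. j < m \<Longrightarrow> VA.lincomb (C j) T = col A j" by metis
    have Aidx: "A $$ (i,c) = (\<Sum>t\<in>T. C c t * t $ i)" if "i < Suc k" "c < m" for i c
    proof -
      have "A $$ (i,c) = col A c $ i" using A that by simp
      also have "\<dots> = VA.lincomb (C c) T $ i" using C that by simp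
      also have "\<dots> = (\<Sum>t\<in>T. C c t * t $ i)" by (rule VA.lincomb_index[OF that(1) Tcar])
      finally show ?thesis .
    qed
    define d where "d t = (\<Sum>c<m. x c * C c t)" for t
    have sw: "(\<Sum>t\<in>T. d t * t $ i) = (\<Sum>c<m. A $$ (i,c) * x c)" if "i < Suc k" for i
    proof -
      have "(\<Sum>t\<in>T. d t * t $ i) = (\<Sum>t\<in>T. \<Sum>c<m. x c * (C c t * t $ i))"
        unfolding d_def by (simp add: sum_distrib_right mult.assoc)
      also have "\<dots> = (\<Sum>c<m. \<Sum>t\<in>T. x c * (C c t * t $ i))" by (rule sum.swap)
      also have "\<dots> = (\<Sum>c<m. x c * A $$ (i,c))"
        by (intro sum.cong refl) (simp add: Aidx[OF that] sum_distrib_left)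
      finally show ?thesis by (simp add: mult.commute)
    qed
    have "\<forall>t\<in>T. d t = 0"
    proof (rule key)
      fix i assume i: "i < k"
      have "(\<Sum>t\<in>T. d t * t $ i) = (\<Sum>c<m. A $$ (i,c) * x c)" using sw i by simp
      also have "\<dots> = (\<Sum>c<m. B $$ (i,c) * x c)" using AB i by simp
      finally show "(\<Sum>t\<in>T. d t * t $ i) = 0" using x0 i by simp
    qed
    hence "(\<Sum>t\<in>T. d t * t $ k) = 0" by simp
    moreover have "(\<Sum>t\<in>T. d t * t $ k) = 1" using sw[of k] x1 by simp
    ultimately show False by simp
  qed
  then obtain j0 where j0: "j0 < m" "col A j0 \<notin> VA.span T" by blast
  let ?v = "col A j0"
  have vcar: "?v \<in> carrier_vec (Suc k)" using A j0 by simp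
  have vT: "?v \<notin> T" using j0 VA.in_own_span[OF Tcar] by blast
  have li2: "VA.lin_indpt (T \<union> {?v})" using VA.lin_dep_iff_in_span[OF Tcar Tli vcar vT] j0 by simp
  have sub2: "T \<union> {?v} \<subseteq> set (cols A)" using TA A j0 by (auto simp: cols_def)
  have "card (T \<union> {?v}) \<le> VA.rank A" by (rule VA.rank_ge_card_indpt[OF A sub2 li2])
  moreover have "card (T \<union> {?v}) = card S + 1" using vT finT cardT by simp
  ultimately show ?thesis using rankB by simp
qed

lemma crowspan_inspan:
  fixes A :: "complex mat" and w :: "complex vec"
  assumes A: "A \<in> carrier_mat k m" and w: "w \<in> carrier_vec m"
    and sp: "gs_inspan k (\<lambda>l c. A $$ (l,c)) m (\<lambda>c. w $ c)"
  shows "w \<in> crowspan A"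
proof -
  obtain y where y: "\<forall>c<m. w $ c = (\<Sum>l<k. y l * A $$ (l,c))" using sp unfolding gs_inspan_def by blast
  have "A\<^sup>T *\<^sub>v vec k y = w"
  proof (rule eq_vecI)
    show "dim_vec (A\<^sup>T *\<^sub>v vec k y) = dim_vec w" using A w by simp
    fix c assume "c < dim_vec w"
    hence c: "c < m" using w by simp
    have "(A\<^sup>T *\<^sub>v vec k y) $ c = (\<Sum>l<k. A $$ (l,c) * y l)"
      using A c by (simp add: scalar_prod_def lessThan_atLeast0)
    also have "\<dots> = w $ c" using y c by (simp add: mult.commute)
    finally show "(A\<^sup>T *\<^sub>v vec k y) $ c = w $ c" .
  qed
  hence "w \<in> vec_space.row_space (dim_col A) A"
    using vec_space.row_space_eq[OF A] A w by auto
  thus ?thesis unfolding crowspan_def .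
qed

lemma det_bad:
  fixes R :: "nat \<Rightarrow> nat \<Rightarrow> complex" and a b :: "nat \<Rightarrow> complex"
  assumes i: "1 \<le> i"
    and RM: "\<And>l c. l < i - 1 \<Longrightarrow> c < m1 + m2 \<Longrightarrow> R l c = Mmat g v1 v2 m1 m2 (i - 1) \<omega> $$ (l,c)"
    and ha: "\<And>c. c < m1 + m2 \<Longrightarrow> a c = (if c < m1 then v1 i \<omega> c else 0)"
    and hb: "\<And>c. c < m1 + m2 \<Longrightarrow> b c = (if c < m1 then 0 else v2 i \<omega> (c - m1))"
    and rk: "crank (Mmat g v1 v2 m1 m2 i \<omega>) = crank (Mmat g v1 v2 m1 m2 (i - 1) \<omega>)"
    and nb: "\<not> (Matrix.vec m1 (v1 i \<omega>) @\<^sub>v 0\<^sub>v m2 \<in> crowspan (Mmat g v1 v2 m1 m2 (i - 1) \<omega>) \<and>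
              0\<^sub>v m1 @\<^sub>v Matrix.vec m2 (v2 i \<omega>) \<in> crowspan (Mmat g v1 v2 m1 m2 (i - 1) \<omega>))"
  shows "g 2 1 i \<omega> = 0 \<or> g 2 2 i \<omega> = 0 \<or>
    (\<exists>c<m1+m2. g 2 1 i \<omega> = - g 2 2 i \<omega> * gs_Res (m1+m2) R (i - 1) b c / gs_Res (m1+m2) R (i - 1) a c)"
proof -
  define k where "k = i - 1"
  have ik: "i = Suc k" using i unfolding k_def by simp
  define m where "m = m1 + m2"
  define x1 where "x1 = g 2 1 i \<omega>"
  define x2 where "x2 = g 2 2 i \<omega>"
  define row where "row c = x1 * a c + x2 * b c" for c
  let ?A = "Mmat g v1 v2 m1 m2 (Suc k) \<omega>"
  let ?B = "Mmat g v1 v2 m1 m2 k \<omega>"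
  have Acar: "?A \<in> carrier_mat (Suc k) m" unfolding m_def by (rule Mmat_carrier)
  have Bcar: "?B \<in> carrier_mat k m" unfolding m_def by (rule Mmat_carrier)
  have Bidx: "?B $$ (l,c) = R l c" if "l < k" "c < m" for l c
    using RM[of l c] that unfolding k_def m_def by simp
  have ABidx: "?A $$ (l,c) = ?B $$ (l,c)" if "l < k" "c < m" for l c
    using that unfolding m_def by (simp add: Mmat_index)
  have Arow: "?A $$ (k,c) = row c" if "c < m" for c
  proof -
    have cm: "c < m1 + m2" using that unfolding m_def .
    have e: "?A $$ (k,c) = (if c < m1 then g 2 1 (k+1) \<omega> * v1 (k+1) \<omega> c else g 2 2 (k+1) \<omega> * v2 (k+1) \<omega> (c - m1))"
      by (rule Mmat_index) (use cm in auto)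
    have ki: "k + 1 = i" using ik by simp
    show ?thesis
    proof (cases "c < m1")
      case True
      thus ?thesis using e ha[OF cm] hb[OF cm] unfolding row_def x1_def x2_def ki by simp
    next
      case False
      thus ?thesis using e ha[OF cm] hb[OF cm] unfolding row_def x1_def x2_def ki by simp
    qed
  qed
  have sp_row: "gs_inspan k R m row"
  proof (rule ccontr)
    assume "\<not> gs_inspan k R m row"
    from fredholm[OF this] obtain x where
      x0: "\<forall>l<k. (\<Sum>c<m. R l c * x c) = 0" and x1': "(\<Sum>c<m. row c * x c) = 1" by blast
    have "vec_space.rank k ?B < vec_space.rank (Suc k) ?A"
    proof (rule rank_lt[OF Acar Bcar ABidx])
      fix l assume "l < k"
      thus "(\<Sum>c<m. ?B $$ (l,c) * x c) = 0" using x0 Bidx by simp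
    next
      show "(\<Sum>c<m. ?A $$ (k,c) * x c) = 1" using x1' Arow by simp
    qed
    moreover have "crank ?A = vec_space.rank (Suc k) ?A" unfolding crank_def using Acar by simp
    moreover have "crank ?B = vec_space.rank k ?B" unfolding crank_def using Bcar by simp
    moreover have "crank ?A = crank ?B" using rk unfolding ik by simp
    ultimately show False by simp
  qed
  have res0: "x1 * gs_Res m R k a c + x2 * gs_Res m R k b c = 0" if "c < m" for c
  proof -
    have "gs_Res m R k row c = 0" by (rule inspan_Res[OF sp_row that])
    thus ?thesis unfolding row_def Res_lin .
  qed
  have "\<not> gs_inspan k R m a \<or> \<not> gs_inspan k R m b"
  proof (rule ccontr)
    assume "\<not> (\<not> gs_inspan k R m a \<or> \<not> gs_inspan k R m b)"
    hence sa: "gs_inspan k R m a" and sb: "gs_inspan k R m b" by auto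
    have "Matrix.vec m1 (v1 i \<omega>) @\<^sub>v 0\<^sub>v m2 \<in> crowspan ?B"
    proof (rule crowspan_inspan[OF Bcar])
      show "Matrix.vec m1 (v1 i \<omega>) @\<^sub>v 0\<^sub>v m2 \<in> carrier_vec m" unfolding m_def by simp
      have "gs_inspan k (\<lambda>l c. ?B $$ (l,c)) m a" using sa Bidx unfolding gs_inspan_def by simp
      then obtain y where y: "\<forall>c<m. a c = (\<Sum>l<k. y l * ?B $$ (l,c))" unfolding gs_inspan_def by blast
      have "\<forall>c<m. (Matrix.vec m1 (v1 i \<omega>) @\<^sub>v 0\<^sub>v m2) $ c = (\<Sum>l<k. y l * ?B $$ (l,c))"
      proof (intro allI impI)
        fix c assume c: "c < m"
        have "(Matrix.vec m1 (v1 i \<omega>) @\<^sub>v 0\<^sub>v m2) $ c = a c" using ha[of c] c unfolding m_def by (simp add: index_append_vec)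
        thus "(Matrix.vec m1 (v1 i \<omega>) @\<^sub>v 0\<^sub>v m2) $ c = (\<Sum>l<k. y l * ?B $$ (l,c))" using y c by simp
      qed
      thus "gs_inspan k (\<lambda>l c. ?B $$ (l,c)) m (\<lambda>c. (Matrix.vec m1 (v1 i \<omega>) @\<^sub>v 0\<^sub>v m2) $ c)" unfolding gs_inspan_def by blast
    qed
    moreover have "0\<^sub>v m1 @\<^sub>v Matrix.vec m2 (v2 i \<omega>) \<in> crowspan ?B"
    proof (rule crowspan_inspan[OF Bcar])
      show "0\<^sub>v m1 @\<^sub>v Matrix.vec m2 (v2 i \<omega>) \<in> carrier_vec m" unfolding m_def by simp
      have "gs_inspan k (\<lambda>l c. ?B $$ (l,c)) m b" using sb Bidx unfolding gs_inspan_def by simp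
      then obtain y where y: "\<forall>c<m. b c = (\<Sum>l<k. y l * ?B $$ (l,c))" unfolding gs_inspan_def by blast
      have "\<forall>c<m. (0\<^sub>v m1 @\<^sub>v Matrix.vec m2 (v2 i \<omega>)) $ c = (\<Sum>l<k. y l * ?B $$ (l,c))"
      proof (intro allI impI)
        fix c assume c: "c < m"
        have "(0\<^sub>v m1 @\<^sub>v Matrix.vec m2 (v2 i \<omega>)) $ c = b c" using hb[of c] c unfolding m_def by (simp add: index_append_vec)
        thus "(0\<^sub>v m1 @\<^sub>v Matrix.vec m2 (v2 i \<omega>)) $ c = (\<Sum>l<k. y l * ?B $$ (l,c))" using y c by simp
      qed
      thus "gs_inspan k (\<lambda>l c. ?B $$ (l,c)) m (\<lambda>c. (0\<^sub>v m1 @\<^sub>v Matrix.vec m2 (v2 i \<omega>)) $ c)" unfolding gs_inspan_def by blast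
    qed
    ultimately show False using nb unfolding k_def by simp
  qed
  hence "(\<exists>c<m. gs_Res m R k a c \<noteq> 0) \<or> (\<exists>c<m. gs_Res m R k b c \<noteq> 0)"
    using Res_inspan by blast
  hence "x1 = 0 \<or> x2 = 0 \<or> (\<exists>c<m. x1 = - x2 * gs_Res m R k b c / gs_Res m R k a c)"
  proof
    assume "\<exists>c<m. gs_Res m R k a c \<noteq> 0"
    then obtain c where c: "c < m" "gs_Res m R k a c \<noteq> 0" by blast
    have "x1 = - x2 * gs_Res m R k b c / gs_Res m R k a c"
      using res0[OF c(1)] c(2) by (simp add: field_simps eq_neg_iff_add_eq_0)
    thus ?thesis using c by blast
  next
    assume "\<exists>c<m. gs_Res m R k b c \<noteq> 0"
    then obtain c where c: "c < m" "gs_Res m R k b c \<noteq> 0" by blast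
    show ?thesis
    proof (cases "\<exists>c<m. gs_Res m R k a c \<noteq> 0")
      case True
      then obtain c' where c': "c' < m" "gs_Res m R k a c' \<noteq> 0" by blast
      have "x1 = - x2 * gs_Res m R k b c' / gs_Res m R k a c'"
        using res0[OF c'(1)] c'(2) by (simp add: field_simps eq_neg_iff_add_eq_0)
      thus ?thesis using c' by blast
    next
      case False
      hence "gs_Res m R k a c = 0" using c by blast
      hence "x2 * gs_Res m R k b c = 0" using res0[OF c(1)] by simp
      thus ?thesis using c by simp
    qed
  qed
  thus ?thesis unfolding x1_def x2_def m_def k_def .
qed

lemma cnj_meas: "f \<in> borel_measurable N \<Longrightarrow> (\<lambda>x. cnj (f x)) \<in> borel_measurable N"
  by (rule measurable_compose[OF _ borel_measurable_continuous_onI]) (auto intro: continuous_intros)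

lemma ip_meas:
  assumes "\<And>c. (\<lambda>z. u z c) \<in> borel_measurable N" "\<And>c. (\<lambda>z. e z c) \<in> borel_measurable N"
  shows "(\<lambda>z. gs_ip m (u z) (e z)) \<in> borel_measurable N"
  unfolding gs_ip_def by (intro borel_measurable_sum borel_measurable_times cnj_meas assms)

lemma coef_meas:
  assumes "\<And>c. (\<lambda>z. u z c) \<in> borel_measurable N" "\<And>c. (\<lambda>z. e z c) \<in> borel_measurable N"
  shows "(\<lambda>z. gs_coef m (u z) (e z)) \<in> borel_measurable N"
proof -
  have i1: "(\<lambda>z. gs_ip m (u z) (e z)) \<in> borel_measurable N" by (rule ip_meas[OF assms])
  have i2: "(\<lambda>z. gs_ip m (e z) (e z)) \<in> borel_measurable N" by (rule ip_meas[OF assms(2) assms(2)])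
  have "{z \<in> space N. gs_ip m (e z) (e z) = 0} \<in> sets N"
    using i2 by measurable
  show ?thesis unfolding gs_coef_def
    by (rule measurable_If) (use i1 i2 \<open>{z \<in> space N. gs_ip m (e z) (e z) = 0} \<in> sets N\<close> in auto)
qed

lemma E_meas:
  assumes R: "\<And>l c. (\<lambda>z. R z l c) \<in> borel_measurable N"
  shows "(\<lambda>z. gsE m (R z) j c) \<in> borel_measurable N"
proof (induction j arbitrary: c rule: less_induct)
  case (less j)
  have eq: "(\<lambda>z. gsE m (R z) j c) = (\<lambda>z. R z j c - (\<Sum>i<j. gs_coef m (R z j) (gsE m (R z) i) * gsE m (R z) i c))"
    by (rule ext, subst gsE.simps) simp
  show ?case unfolding eq
    by (intro borel_measurable_diff borel_measurable_sum borel_measurable_times coef_meas R less) auto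
qed

lemma Res_meas:
  assumes R: "\<And>l c. (\<lambda>z. R z l c) \<in> borel_measurable N" and u: "\<And>c. (\<lambda>z. u z c) \<in> borel_measurable N"
  shows "(\<lambda>z. gs_Res m (R z) k (u z) c) \<in> borel_measurable N"
  unfolding gs_Res_def
  by (intro borel_measurable_diff borel_measurable_sum borel_measurable_times coef_meas u E_meas R)

lemma (in prob_space) indep_atomless:
  fixes W X :: "'a \<Rightarrow> complex"
  assumes ind: "indep_var borel W borel X" and at: "\<And>c. measure M {\<omega> \<in> space M. X \<omega> = c} = 0"
  shows "{\<omega> \<in> space M. X \<omega> = W \<omega>} \<in> null_sets M"
proof -
  have W: "W \<in> borel_measurable M" and X: "X \<in> borel_measurable M"
    using ind by (blast dest: indep_var_rv1 indep_var_rv2)+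
  have dist: "distr M borel W \<Otimes>\<^sub>M distr M borel X = distr M (borel \<Otimes>\<^sub>M borel) (\<lambda>x. (W x, X x))"
    using ind indep_var_distribution_eq by blast
  define D where "D = {p \<in> space (borel \<Otimes>\<^sub>M borel). snd p = (fst p :: complex)}"
  have D: "D \<in> sets (borel \<Otimes>\<^sub>M borel)" unfolding D_def
    by (rule measurable_equality_set) measurable
  have set_eq: "{\<omega> \<in> space M. X \<omega> = W \<omega>} = (\<lambda>x. (W x, X x)) -` D \<inter> space M"
    unfolding D_def by (auto simp: space_pair_measure)
  have WX: "(\<lambda>x. (W x, X x)) \<in> measurable M (borel \<Otimes>\<^sub>M borel)" using W X by measurable
  have sets: "{\<omega> \<in> space M. X \<omega> = W \<omega>} \<in> sets M" using W X by measurable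
  interpret PX: prob_space "distr M borel X" by (rule prob_space_distr[OF X])
  have "emeasure M {\<omega> \<in> space M. X \<omega> = W \<omega>} = emeasure (distr M (borel \<Otimes>\<^sub>M borel) (\<lambda>x. (W x, X x))) D"
    unfolding set_eq by (rule emeasure_distr[OF WX D, symmetric])
  also have "\<dots> = emeasure (distr M borel W \<Otimes>\<^sub>M distr M borel X) D" unfolding dist ..
  also have "\<dots> = (\<integral>\<^sup>+w. emeasure (distr M borel X) (Pair w -` D) \<partial>distr M borel W)"
    by (rule PX.emeasure_pair_measure_alt) (use D in simp)
  also have "\<dots> = (\<integral>\<^sup>+w. 0 \<partial>distr M borel W)"
  proof (rule nn_integral_cong)
    fix w
    have "Pair w -` D = {w}" unfolding D_def by (auto simp: space_pair_measure)
    hence "emeasure (distr M borel X) (Pair w -` D) = emeasure M (X -` {w} \<inter> space M)"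
      using X by (simp add: emeasure_distr)
    also have "X -` {w} \<inter> space M = {\<omega> \<in> space M. X \<omega> = w}" by auto
    also have "emeasure M {\<omega> \<in> space M. X \<omega> = w} = 0"
      using at[of w] X by (simp add: emeasure_eq_measure)
    finally show "emeasure (distr M borel X) (Pair w -` D) = 0" .
  qed
  also have "\<dots> = 0" by simp
  finally show ?thesis using sets by (simp add: null_sets_def)
qed

theorem lemma6:
  fixes M :: "'w measure"
    and n m1 m2 :: nat
    and g :: "nat \<Rightarrow> nat \<Rightarrow> nat \<Rightarrow> 'w \<Rightarrow> complex"
    and v1 v2 :: "nat \<Rightarrow> 'w \<Rightarrow> nat \<Rightarrow> complex"
  assumes "prob_space M"
    and "0 < m1" and "0 < m2"
    and indep: "prob_space.indep_vars M (\<lambda>_. borel) (\<lambda>(k, j, t). g k j t) ({1,2} \<times> {1,2} \<times> {1..n})"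
    and ident: "\<forall>k\<in>{1,2}. \<forall>j\<in>{1,2}. \<forall>t\<in>{1..n}. distr M borel (g k j t) = distr M borel (g 1 1 1)"
    and cont: "\<forall>k\<in>{1,2}. \<forall>j\<in>{1,2}. \<forall>t\<in>{1..n}. \<forall>c::complex.
                 measure M {\<omega> \<in> space M. g k j t \<omega> = c} = 0"
    and det1: "\<forall>t\<in>{1..n}. \<exists>F :: (nat \<times> nat \<times> nat \<Rightarrow> complex) \<Rightarrow> nat \<Rightarrow> complex.
                 (\<forall>c<m1. (\<lambda>x. F x c) \<in> borel_measurable (PiM (past t) (\<lambda>_. borel))) \<and>
                 (\<forall>\<omega>\<in>space M. \<forall>c<m1. v1 t \<omega> c = F (\<lambda>x\<in>past t. case x of (k, j, s) \<Rightarrow> g k j s \<omega>) c)"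
    and det2: "\<forall>t\<in>{1..n}. \<exists>F :: (nat \<times> nat \<times> nat \<Rightarrow> complex) \<Rightarrow> nat \<Rightarrow> complex.
                 (\<forall>c<m2. (\<lambda>x. F x c) \<in> borel_measurable (PiM (past t) (\<lambda>_. borel))) \<and>
                 (\<forall>\<omega>\<in>space M. \<forall>c<m2. v2 t \<omega> c = F (\<lambda>x\<in>past t. case x of (k, j, s) \<Rightarrow> g k j s \<omega>) c)"
  shows "AE \<omega> in M. \<forall>i\<in>{1..n}.
           crank (Mmat g v1 v2 m1 m2 i \<omega>) = crank (Mmat g v1 v2 m1 m2 (i - 1) \<omega>) \<longrightarrow>
             (Matrix.vec m1 (v1 i \<omega>) @\<^sub>v 0\<^sub>v m2 \<in> crowspan (Mmat g v1 v2 m1 m2 (i - 1) \<omega>) \<and>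
              0\<^sub>v m1 @\<^sub>v Matrix.vec m2 (v2 i \<omega>) \<in> crowspan (Mmat g v1 v2 m1 m2 (i - 1) \<omega>))"
proof -
  interpret prob_space M by fact
  define I where "I = ({1,2} \<times> {1,2} \<times> {1..n} :: (nat \<times> nat \<times> nat) set)"
  define G where "G = (\<lambda>(k, j, t). g k j t)"
  have ind: "indep_vars (\<lambda>_. borel) G I" using indep unfolding G_def I_def .
  obtain F1 where F1: "\<forall>t\<in>{1..n}. (\<forall>c<m1. (\<lambda>x. F1 t x c) \<in> borel_measurable (PiM (past t) (\<lambda>_. borel))) \<and>
                 (\<forall>\<omega>\<in>space M. \<forall>c<m1. v1 t \<omega> c = F1 t (\<lambda>x\<in>past t. case x of (k, j, s) \<Rightarrow> g k j s \<omega>) c)"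
    using bchoice[OF det1] by blast
  obtain F2 where F2: "\<forall>t\<in>{1..n}. (\<forall>c<m2. (\<lambda>x. F2 t x c) \<in> borel_measurable (PiM (past t) (\<lambda>_. borel))) \<and>
                 (\<forall>\<omega>\<in>space M. \<forall>c<m2. v2 t \<omega> c = F2 t (\<lambda>x\<in>past t. case x of (k, j, s) \<Rightarrow> g k j s \<omega>) c)"
    using bchoice[OF det2] by blast
  have gmeas: "g k j t \<in> borel_measurable M" if "k \<in> {1,2}" "j \<in> {1,2}" "t \<in> {1..n}" for k j t
  proof -
    have "(k,j,t) \<in> I" using that unfolding I_def by auto
    hence "G (k,j,t) \<in> borel_measurable M" using ind unfolding indep_vars_def by blast
    thus ?thesis unfolding G_def by simp
  qed
  have gnull: "{\<omega> \<in> space M. g k j t \<omega> = c} \<in> null_sets M" if "k \<in> {1,2}" "j \<in> {1,2}" "t \<in> {1..n}" for k j t c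
  proof -
    have m: "g k j t \<in> borel_measurable M" by (rule gmeas[OF that])
    have s: "{\<omega> \<in> space M. g k j t \<omega> = c} \<in> sets M" using m by measurable
    have "measure M {\<omega> \<in> space M. g k j t \<omega> = c} = 0" using cont that by blast
    thus ?thesis using s by (simp add: null_sets_def emeasure_eq_measure)
  qed
  show ?thesis
  proof (rule AE_finite_allI)
    show "finite {1..n}" by simp
  next
    fix i assume i: "i \<in> {1..n}"
    show "AE \<omega> in M. crank (Mmat g v1 v2 m1 m2 i \<omega>) = crank (Mmat g v1 v2 m1 m2 (i - 1) \<omega>) \<longrightarrow>
             (Matrix.vec m1 (v1 i \<omega>) @\<^sub>v 0\<^sub>v m2 \<in> crowspan (Mmat g v1 v2 m1 m2 (i - 1) \<omega>) \<and>
              0\<^sub>v m1 @\<^sub>v Matrix.vec m2 (v2 i \<omega>) \<in> crowspan (Mmat g v1 v2 m1 m2 (i - 1) \<omega>))"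
    proof -
    define k where "k = i - 1"
    define m where "m = m1 + m2"
    define L where "L = past i \<union> {(2::nat,2::nat,i)}"
    define A1 where "A1 = {(2::nat,1::nat,i)}"
    define N where "N = PiM L (\<lambda>_. borel :: complex measure)"
    define Zr where "Zr \<omega> = restrict (\<lambda>x. G x \<omega>) L" for \<omega>
    define Xr where "Xr \<omega> = restrict (\<lambda>x. G x \<omega>) A1" for \<omega>
    define V1 where "V1 t z c = (if c < m1 then F1 t (restrict z (past t)) c else 0)" for t z c
    define V2 where "V2 t z c = (if c < m2 then F2 t (restrict z (past t)) c else 0)" for t z c
    define Rz where "Rz z l c = (if l < k then (if c < m1 then z (2,1,l+1) * V1 (l+1) z c
                                 else z (2,2,l+1) * V2 (l+1) z (c - m1)) else 0)" for z l c
    define az where "az z c = (if c < m1 then V1 i z c else 0)" for z c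
    define bz where "bz z c = (if c < m1 then 0 else V2 i z (c - m1))" for z c
    define \<phi> where "\<phi> c z = - z (2,2,i) * gs_Res m (Rz z) k (bz z) c / gs_Res m (Rz z) k (az z) c" for c z
    have i1: "1 \<le> i" "i \<le> n" using i by auto
    have pastL: "past t \<subseteq> L" if "t \<le> i" for t
      using that unfolding L_def past_def by auto
    have LI: "L \<subseteq> I" using i1 unfolding L_def I_def past_def by auto
    have A1I: "A1 \<subseteq> I" using i1 unfolding A1_def I_def by auto
    have disj: "L \<inter> A1 = {}" unfolding L_def A1_def past_def by auto
    have indZX: "indep_var N Zr (PiM A1 (\<lambda>_. borel)) Xr"
      using indep_var_restrict[OF ind disj LI A1I] unfolding N_def Zr_def Xr_def .
    have compm: "(\<lambda>z. z x) \<in> borel_measurable N" if "x \<in> L" for x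
      unfolding N_def using measurable_component_singleton[OF that] .
    have V1m: "(\<lambda>z. V1 t z c) \<in> borel_measurable N" if "t \<in> {1..n}" "t \<le> i" for t c
    proof (cases "c < m1")
      case True
      have "(\<lambda>x. F1 t x c) \<in> borel_measurable (PiM (past t) (\<lambda>_. borel))" using F1 that(1) True by blast
      hence "(\<lambda>z. F1 t (restrict z (past t)) c) \<in> borel_measurable N"
        unfolding N_def by (rule measurable_compose[OF measurable_restrict_subset[OF pastL[OF that(2)]]])
      thus ?thesis unfolding V1_def using True by simp
    qed (simp add: V1_def)
    have V2m: "(\<lambda>z. V2 t z c) \<in> borel_measurable N" if "t \<in> {1..n}" "t \<le> i" for t c
    proof (cases "c < m2")
      case True
      have "(\<lambda>x. F2 t x c) \<in> borel_measurable (PiM (past t) (\<lambda>_. borel))" using F2 that(1) True by blast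
      hence "(\<lambda>z. F2 t (restrict z (past t)) c) \<in> borel_measurable N"
        unfolding N_def by (rule measurable_compose[OF measurable_restrict_subset[OF pastL[OF that(2)]]])
      thus ?thesis unfolding V2_def using True by simp
    qed (simp add: V2_def)
    have Rzm: "(\<lambda>z. Rz z l c) \<in> borel_measurable N" for l c
    proof (cases "l < k")
      case True
      have t: "l + 1 \<in> {1..n}" "l + 1 \<le> i" using True i1 unfolding k_def by auto
      have x1: "(2,1,l+1) \<in> L" "(2,2,l+1) \<in> L" using True i1 unfolding k_def L_def past_def by auto
      show ?thesis unfolding Rz_def using True
        by (simp, intro measurable_If borel_measurable_times compm x1 V1m V2m t) simp
    qed (simp add: Rz_def)
    have azm: "(\<lambda>z. az z c) \<in> borel_measurable N" for c
      unfolding az_def using V1m[of i c] i1 by simp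
    have bzm: "(\<lambda>z. bz z c) \<in> borel_measurable N" for c
      unfolding bz_def using V2m[of i "c - m1"] i1 by simp
    have \<phi>m: "\<phi> c \<in> borel_measurable N" for c
    proof -
      have "(2,2,i) \<in> L" unfolding L_def by simp
      thus ?thesis unfolding \<phi>_def
        by (intro borel_measurable_divide borel_measurable_times borel_measurable_uminus compm
            Res_meas Rzm azm bzm)
    qed
    have X_eq: "(\<lambda>f. f (2,1,i)) \<circ> Xr = g 2 1 i"
      by (rule ext) (simp add: Xr_def A1_def G_def)
    have null\<phi>: "{\<omega> \<in> space M. g 2 1 i \<omega> = (\<phi> c \<circ> Zr) \<omega>} \<in> null_sets M" for c
    proof -
      have "indep_var borel (\<phi> c \<circ> Zr) borel ((\<lambda>f. f (2,1,i)) \<circ> Xr)"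
        by (rule indep_var_compose[OF indZX \<phi>m]) (simp add: A1_def)
      hence iv: "indep_var borel (\<phi> c \<circ> Zr) borel (g 2 1 i)" unfolding X_eq .
      show ?thesis
        by (rule indep_atomless[OF iv]) (use cont i in auto)
    qed
    define Nul where "Nul = {\<omega> \<in> space M. g 2 1 i \<omega> = 0} \<union> {\<omega> \<in> space M. g 2 2 i \<omega> = 0} \<union>
       (\<Union>c\<in>{..<m}. {\<omega> \<in> space M. g 2 1 i \<omega> = (\<phi> c \<circ> Zr) \<omega>})"
    have Nul_null: "Nul \<in> null_sets M"
      unfolding Nul_def using gnull[of 2 1 i 0] gnull[of 2 2 i 0] null\<phi> i
      by (intro null_sets.Un null_sets_UN') auto
    show ?thesis
    proof (rule AE_I'[OF Nul_null], rule subsetI)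
      fix \<omega> assume H: "\<omega> \<in> {\<omega> \<in> space M. \<not> (crank (Mmat g v1 v2 m1 m2 i \<omega>) = crank (Mmat g v1 v2 m1 m2 (i - 1) \<omega>) \<longrightarrow>
             (Matrix.vec m1 (v1 i \<omega>) @\<^sub>v 0\<^sub>v m2 \<in> crowspan (Mmat g v1 v2 m1 m2 (i - 1) \<omega>) \<and>
              0\<^sub>v m1 @\<^sub>v Matrix.vec m2 (v2 i \<omega>) \<in> crowspan (Mmat g v1 v2 m1 m2 (i - 1) \<omega>)))}"
      hence \<omega>: "\<omega> \<in> space M"
        and rk: "crank (Mmat g v1 v2 m1 m2 i \<omega>) = crank (Mmat g v1 v2 m1 m2 (i - 1) \<omega>)"
        and nb: "\<not> (Matrix.vec m1 (v1 i \<omega>) @\<^sub>v 0\<^sub>v m2 \<in> crowspan (Mmat g v1 v2 m1 m2 (i - 1) \<omega>) \<and>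
              0\<^sub>v m1 @\<^sub>v Matrix.vec m2 (v2 i \<omega>) \<in> crowspan (Mmat g v1 v2 m1 m2 (i - 1) \<omega>))"
        by auto
      have Zc: "Zr \<omega> (a,b,t) = g a b t \<omega>" if "(a,b,t) \<in> L" for a b t
        using that unfolding Zr_def G_def by simp
      have rZ: "restrict (Zr \<omega>) (past t) = (\<lambda>x\<in>past t. case x of (k, j, s) \<Rightarrow> g k j s \<omega>)" if "t \<le> i" for t
      proof -
        have "restrict (Zr \<omega>) (past t) = restrict (\<lambda>x. G x \<omega>) (L \<inter> past t)" unfolding Zr_def by simp
        also have "L \<inter> past t = past t" using pastL[OF that] by blast
        finally show ?thesis unfolding G_def by (auto simp: fun_eq_iff split: prod.split)
      qed
      have vZ1: "V1 t (Zr \<omega>) c = v1 t \<omega> c" if "t \<in> {1..n}" "t \<le> i" "c < m1" for t c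
        unfolding V1_def rZ[OF that(2)] using F1 that \<omega> by simp
      have vZ2: "V2 t (Zr \<omega>) c = v2 t \<omega> c" if "t \<in> {1..n}" "t \<le> i" "c < m2" for t c
        unfolding V2_def rZ[OF that(2)] using F2 that \<omega> by simp
      have RM: "Rz (Zr \<omega>) l c = Mmat g v1 v2 m1 m2 (i - 1) \<omega> $$ (l,c)" if "l < i - 1" "c < m1 + m2" for l c
      proof -
        have t: "l + 1 \<in> {1..n}" "l + 1 \<le> i" using that i1 by auto
        have x1: "(2,1,l+1) \<in> L" "(2,2,l+1) \<in> L" using that i1 unfolding L_def past_def by auto
        show ?thesis
        proof (cases "c < m1")
          case True
          have e: "Zr \<omega> (2,1,l+1) * V1 (l+1) (Zr \<omega>) c = g 2 1 (l+1) \<omega> * v1 (l+1) \<omega> c"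
            by (simp only: Zc[OF x1(1)] vZ1[OF t True])
          thus ?thesis using that True unfolding Rz_def k_def
            by (simp add: Mmat_index)
        next
          case False
          hence c2: "c - m1 < m2" using that by simp
          have e: "Zr \<omega> (2,2,l+1) * V2 (l+1) (Zr \<omega>) (c - m1) = g 2 2 (l+1) \<omega> * v2 (l+1) \<omega> (c - m1)"
            by (simp only: Zc[OF x1(2)] vZ2[OF t c2])
          thus ?thesis using that False unfolding Rz_def k_def
            by (simp add: Mmat_index)
        qed
      qed
      have ha: "az (Zr \<omega>) c = (if c < m1 then v1 i \<omega> c else 0)" if "c < m1 + m2" for c
        unfolding az_def using vZ1[of i c] i1 by simp
      have hb: "bz (Zr \<omega>) c = (if c < m1 then 0 else v2 i \<omega> (c - m1))" if "c < m1 + m2" for c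
        unfolding bz_def using vZ2[of i "c - m1"] i1 that by simp
      have D: "g 2 1 i \<omega> = 0 \<or> g 2 2 i \<omega> = 0 \<or>
          (\<exists>c<m1+m2. g 2 1 i \<omega> = - g 2 2 i \<omega> * gs_Res (m1+m2) (Rz (Zr \<omega>)) (i - 1) (bz (Zr \<omega>)) c /
                gs_Res (m1+m2) (Rz (Zr \<omega>)) (i - 1) (az (Zr \<omega>)) c)"
        by (rule det_bad[OF i1(1) RM ha hb rk nb])
      have z22: "Zr \<omega> (2,2,i) = g 2 2 i \<omega>" by (rule Zc) (simp add: L_def)
      show "\<omega> \<in> Nul"
        using D \<omega> unfolding Nul_def \<phi>_def m_def k_def comp_def by (auto simp: z22)
    qed
    qed
  qed
qed

end
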